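(* Let $1\leq p <\infty$ and $f\in L^{p}(\mu)$. Then the set $\mathcal{O}_{f}:=\left\{\mathfrak{a}\in I : \int_{\mathcal{C}_{\mathfrak{a}}}|f|^{p} \ d\mu\neq 0 \right\}$ is countable and $$\sum_{\mathfrak{a}\in\mathcal{O}_{f}}\int_{\mathcal{C}_{\mathfrak{a}}}|f|^{p} \ d\mu =\int_{\mathcal{F}_{f}}|f|^{p} \ d\mu \leq \int_{\mathbb{R}^{\mathbb{N}}} |f|^{p} \ d\mu,$$ where $\mathcal{F}_{f}:= \bigsqcup_{\mathfrak{a}\in \mathcal{O}_{f}}\mathcal{C}_{\mathfrak{a}}$.
   Context: Let $\mathcal{B}$ be the Borel $\sigma$-algebra of $\mathbb{R}$, $\lambda$ the Lebesgue measure, and $\mathcal{B}_{\infty}$ the $\sigma$-algebra on $\mathbb{R}^{\mathbb{N}}$ generated by the cylinder sets $\prod_{i=1}^{m}C_{i}\times\prod_{i=m+1}^{\infty}\mathbb{R}$ with $C_i\in\mathcal{B}$, $m\in\mathbb{N}$. Let $\mathcal{F}(\mathcal{B},\lambda)$ be the set of finite rectangles $\prod_{i\in\mathbb{N}}C_{i}$ with $C_i\in\mathcal{B}$ and $\prod_{i}\lambda(C_i)\in[0,\infty)$, with $\mathrm{vol}(\prod_{i}C_i):=\prod_i\lambda(C_i)$. The measure $\mu$ is the restriction to $\mathcal{B}_{\infty}$ of the outer measure $\mu^{\ast}(A):=\inf\{\sum_{n}\mathrm{vol}(\mathscr{C}_{n}) : \mathscr{C}_{n}\in\mathcal{F}(\mathcal{B},\lambda),\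 A\subset\bigcup_{n}\mathscr{C}_{n}\}$ ($\inf\varnothing=\infty$). Let $I:=\mathbb{Z}^{\mathbb{N}}$ and, for $\mathfrak{a}=(a_n)_{n\in\mathbb{N}}\in I$, let $\mathcal{C}_{\mathfrak{a}}:=\prod_{n\in\mathbb{N}}[a_{n},a_{n}+1)$ (these unit cubes are pairwise disjoint, cover $\mathbb{R}^{\mathbb{N}}$, and have $\mu$-measure $1$). *)

theory Defs
  imports "HOL-Analysis.Analysis"
begin

type_synonym seqR = "nat \<Rightarrow> real"

definition B_inf :: "seqR set set" where
  "B_inf = sets (PiM UNIV (\<lambda>_. borel))"

definition rect :: "(nat \<Rightarrow> real set) \<Rightarrow> seqR set" where
  "rect C = {x. \<forall>i. x i \<in> C i}"

definition vol_conv :: "(nat \<Rightarrow> real set) \<Rightarrow> ennreal \<Rightarrow> bool" where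
  "vol_conv C v \<longleftrightarrow> (\<lambda>n. \<Prod>i<n. emeasure lborel (C i)) \<longlonglongrightarrow> v"

definition vol :: "(nat \<Rightarrow> real set) \<Rightarrow> ennreal" where
  "vol C = lim (\<lambda>n. \<Prod>i<n. emeasure lborel (C i))"

definition finite_rect :: "(nat \<Rightarrow> real set) \<Rightarrow> bool" where
  "finite_rect C \<longleftrightarrow> (\<forall>i. C i \<in> sets borel) \<and> (\<exists>v. vol_conv C v \<and> v < \<infinity>)"

definition mu_outer :: "seqR set \<Rightarrow> ennreal" where
  "mu_outer A = Inf {(\<Sum>n. vol (R n)) | R. (\<forall>n. finite_rect (R n)) \<and> A \<subseteq> (\<Union>n. rect (R n))}"

definition mu :: "seqR measure" where
  "mu = measure_of UNIV B_inf mu_outer"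

definition cube :: "(nat \<Rightarrow> int) \<Rightarrow> seqR set" where
  "cube a = {x. \<forall>n. of_int (a n) \<le> x n \<and> x n < of_int (a n) + 1}"

definition Lp :: "real \<Rightarrow> seqR measure \<Rightarrow> (seqR \<Rightarrow> real) set" where
  "Lp p M = {f. f \<in> borel_measurable M \<and> integrable M (\<lambda>x. \<bar>f x\<bar> powr p)}"

end

theory Submission
  imports Defs
begin

lemma ind_int:
  fixes g :: "'a \<Rightarrow> real"
  assumes "A \<in> sets M" "integrable M g"
  shows "integrable M (\<lambda>x. indicator A x * g x)"
  using integrable_mult_indicator[OF assms] by simp

lemma set_int_finite_disj:
  fixes g :: "'a \<Rightarrow> real"
  assumes "integrable M g" "\<And>i. C i \<in> sets M" "disjoint_family C" "finite E"
  shows "(LINT x:(\<Union>i\<in>E. C i)|M. g x) = (\<Sum>i\<in>E. LINT x:C i|M. g x)"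
proof -
  have "(LINT x:(\<Union>i\<in>E. C i)|M. g x) = (LINT x|M. (\<Sum>i\<in>E. indicator (C i) x * g x))"
    unfolding set_lebesgue_integral_def
    using assms(3,4) by (simp add: indicator_UN_disjoint disjoint_family_on_def sum_distrib_right)
  also have "\<dots> = (\<Sum>i\<in>E. LINT x|M. indicator (C i) x * g x)"
    using Bochner_Integration.integral_sum[where M=M and I=E and f="\<lambda>i x. indicator (C i) x * g x"] ind_int[OF assms(2) assms(1)] by simp
  finally show ?thesis by (simp add: set_lebesgue_integral_def)
qed

lemma set_int_le_int:
  fixes g :: "'a \<Rightarrow> real"
  assumes "integrable M g" "A \<in> sets M" "\<And>x. g x \<ge> 0"
  shows "(LINT x:A|M. g x) \<le> (LINT x|M. g x)"
  unfolding set_lebesgue_integral_def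
  using assms ind_int[OF assms(2,1)] by (intro Bochner_Integration.integral_mono) (auto simp: indicator_def)

lemma set_int_nonneg:
  fixes g :: "'a \<Rightarrow> real"
  assumes "\<And>x. g x \<ge> 0"
  shows "(LINT x:A|M. g x) \<ge> 0"
  unfolding set_lebesgue_integral_def
  using assms by (intro integral_nonneg_AE) (auto simp: indicator_def)

lemma general:
  fixes g :: "'a \<Rightarrow> real" and C :: "'i \<Rightarrow> 'a set"
  assumes int: "integrable M g" and meas: "\<And>i. C i \<in> sets M" and disj: "disjoint_family C"
    and nn: "\<And>x. g x \<ge> 0"
  defines "Oset \<equiv> {i. (LINT x:C i|M. g x) \<noteq> 0}"
  defines "F \<equiv> (\<Union>i\<in>Oset. C i)"
  shows "countable Oset
    \<and> ((\<lambda>i. LINT x:C i|M. g x) has_sum (LINT x:F|M. g x)) Oset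
    \<and> (LINT x:F|M. g x) \<le> (LINT x|M. g x)"
proof -
  define h where "h i = (LINT x:C i|M. g x)" for i
  have hnn: "h i \<ge> 0" for i unfolding h_def by (rule set_int_nonneg[OF nn])
  have fin: "sum h E = (LINT x:(\<Union>i\<in>E. C i)|M. g x)" if "finite E" for E
    unfolding h_def using set_int_finite_disj[OF int meas disj that] by simp
  have finle: "sum h E \<le> (LINT x|M. g x)" if "finite E" for E
  proof -
    have "(\<Union>i\<in>E. C i) \<in> sets M" using meas that by auto
    then show ?thesis using fin[OF that] set_int_le_int[OF int _ nn] by simp
  qed
  have summ: "h summable_on UNIV"
    by (rule nonneg_bdd_above_summable_on) (use hnn finle in \<open>auto simp: bdd_above_def\<close>)
  have cO: "countable Oset"
    using summable_countable_real[OF summ] unfolding Oset_def h_def by simp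
  have Fm: "F \<in> sets M" unfolding F_def using cO meas by (intro sets.countable_UN') auto
  have Fle: "(LINT x:F|M. g x) \<le> (LINT x|M. g x)" by (rule set_int_le_int[OF int Fm nn])
  have summO: "h summable_on Oset" using summ summable_on_subset_banach by blast
  have hs: "(h has_sum (SUP E\<in>{E. finite E \<and> E \<subseteq> Oset}. sum h E)) Oset"
    by (rule has_sum_nonneg_SUPREMUM_real[OF summO hnn])
  have bdd: "bdd_above (sum h ` {E. finite E \<and> E \<subseteq> Oset})"
    using finle by (auto simp: bdd_above_def)
  have le1: "sum h E \<le> (LINT x:F|M. g x)" if "finite E" "E \<subseteq> Oset" for E
  proof -
    have Em: "(\<Union>i\<in>E. C i) \<in> sets M" using meas that by auto
    have sub: "(\<Union>i\<in>E. C i) \<subseteq> F" using that(2) unfolding F_def by auto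
    have "sum h E = (LINT x|M. indicator (\<Union>i\<in>E. C i) x * g x)"
      using fin[OF that(1)] by (simp add: set_lebesgue_integral_def)
    also have "\<dots> \<le> (LINT x|M. indicator F x * g x)"
      using ind_int[OF Em int] ind_int[OF Fm int] sub nn
      by (intro Bochner_Integration.integral_mono) (auto simp: indicator_def)
    also have "\<dots> = (LINT x:F|M. g x)" by (simp add: set_lebesgue_integral_def)
    finally show ?thesis .
  qed
  have eq: "(SUP E\<in>{E. finite E \<and> E \<subseteq> Oset}. sum h E) = (LINT x:F|M. g x)"
  proof (rule antisym)
    show "(SUP E\<in>{E. finite E \<and> E \<subseteq> Oset}. sum h E) \<le> (LINT x:F|M. g x)"
      by (rule cSUP_least) (use le1 in auto)
  next
    show "(LINT x:F|M. g x) \<le> (SUP E\<in>{E. finite E \<and> E \<subseteq> Oset}. sum h E)"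
    proof (cases "Oset = {}")
      case True
      then show ?thesis unfolding F_def using cSUP_upper[OF _ bdd, of "{}"] by (simp add: set_lebesgue_integral_def)
    next
      case False
      define e where "e = from_nat_into Oset"
      have rng: "range e = Oset" unfolding e_def using range_from_nat_into[OF False cO] .
      define A where "A n = (\<Union>i\<in>e ` {..<n}. C i)" for n
      have Am: "A n \<in> sets M" for n unfolding A_def using meas by auto
      have inc: "incseq A" unfolding A_def incseq_def by (auto intro: order.strict_trans2)
      have UA: "(\<Union>n. A n) = F" unfolding A_def F_def rng[symmetric] by auto
      have si: "set_integrable M (\<Union>n. A n) g"
        unfolding UA set_integrable_def using Fm
        by (auto intro!: ind_int int)
      have lim: "(\<lambda>n. LINT x:(A n)|M. g x) \<longlonglongrightarrow> (LINT x:F|M. g x)"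
        using set_integral_cont_up[OF Am inc si] UA by simp
      have "(LINT x:(A n)|M. g x) \<le> (SUP E\<in>{E. finite E \<and> E \<subseteq> Oset}. sum h E)" for n
      proof -
        have "(LINT x:(A n)|M. g x) = sum h (e ` {..<n})" unfolding A_def using fin by simp
        also have "\<dots> \<le> (SUP E\<in>{E. finite E \<and> E \<subseteq> Oset}. sum h E)"
          by (rule cSUP_upper[OF _ bdd]) (use rng in auto)
        finally show ?thesis .
      qed
      then show ?thesis using lim by (intro LIMSEQ_le_const2) auto
    qed
  qed
  show ?thesis using cO Fle hs eq unfolding h_def by simp
qed

lemma sets_mu: "sets mu = B_inf"
proof -
  have "sets mu = sigma_sets UNIV B_inf"
    unfolding mu_def by (rule sets_measure_of) auto
  also have "\<dots> = B_inf"
  proof -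
    have sp: "space (PiM UNIV (\<lambda>_::nat. (borel::real measure))) = UNIV"
      by (simp add: space_PiM)
    show ?thesis unfolding B_inf_def
      using sets.sigma_algebra_axioms[of "PiM UNIV (\<lambda>_::nat. (borel::real measure))"]
        sigma_algebra.sigma_sets_eq sp by metis
  qed
  finally show ?thesis .
qed

lemma cube_meas: "cube a \<in> sets mu"
proof -
  have "cube a = PiE UNIV (\<lambda>n. {real_of_int (a n) ..< real_of_int (a n) + 1})"
    unfolding cube_def by (auto simp: PiE_def Pi_def)
  also have "\<dots> \<in> sets (PiM UNIV (\<lambda>_::nat. (borel::real measure)))"
    by (rule sets_PiM_I_countable) auto
  finally show ?thesis unfolding sets_mu B_inf_def .
qed

lemma cube_disj: "disjoint_family cube"
proof (unfold disjoint_family_on_def, intro ballI impI)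
  fix a b :: "nat \<Rightarrow> int" assume "a \<noteq> b"
  then obtain n where n: "a n \<noteq> b n" by auto
  show "cube a \<inter> cube b = {}"
  proof (rule ccontr)
    assume "cube a \<inter> cube b \<noteq> {}"
    then obtain x where "x \<in> cube a" "x \<in> cube b" by auto
    then have "real_of_int (a n) \<le> x n" "x n < a n + 1" "real_of_int (b n) \<le> x n" "x n < b n + 1"
      unfolding cube_def by auto
    then have "a n < b n + 1" "b n < a n + 1" by linarith+
    with n show False by linarith
  qed
qed

theorem theorem3p1:
  fixes p :: real and f :: "seqR \<Rightarrow> real"
  assumes "1 \<le> p" and "f \<in> Lp p mu"
  defines "O_f \<equiv> {a :: nat \<Rightarrow> int. (LINT x:cube a|mu. \<bar>f x\<bar> powr p) \<noteq> 0}"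
  defines "F_f \<equiv> (\<Union>a\<in>O_f. cube a)"
  shows "countable O_f
    \<and> ((\<lambda>a. LINT x:cube a|mu. \<bar>f x\<bar> powr p) has_sum (LINT x:F_f|mu. \<bar>f x\<bar> powr p)) O_f
    \<and> (LINT x:F_f|mu. \<bar>f x\<bar> powr p) \<le> (LINT x|mu. \<bar>f x\<bar> powr p)"
proof -
  have int: "integrable mu (\<lambda>x. \<bar>f x\<bar> powr p)" using assms(2) unfolding Lp_def by simp
  show ?thesis unfolding O_f_def F_f_def
    by (rule general[OF int cube_meas cube_disj]) simp
qed

end
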